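(* Let $\mathsf{T}$ be a rooted plane tree with $n\geq 2$ nodes and root $\mathfrak{r}$. Let $C^*\in\mathcal{M}_\mathsf{T}$ be a maximal chain with $|C^*|+f_{C^*}(\mathfrak{r})=\max_{C\in\mathcal{M}_\mathsf{T}}(|C|+f_C(\mathfrak{r}))$, and let $k=f_{C^*}(\mathfrak{r})$. Let $v_0=\mathfrak{r},v_1,\dots,v_{|C^*|-1}$ be the nodes of $C^*$ from top to bottom. For $0\leq i\leq|C^*|-2$, let $B_i=\{u\in\mathsf{T}\setminus C^*:u\leq_\mathsf{T} v_i,\ u\not\leq_\mathsf{T} v_{i+1}\}$. Define a partial order $\sqsubseteq$ on $\mathsf{T}\setminus C^*$ by: for $x\in B_i$, $y\in B_j$, if $i>j$ then $x\sqsubseteq y$; if $i=j$ then $x\sqsubseteq y$ iff $x\geq_\mathsf{T} y$. Let $v_{|C^*|},v_{|C^*|+1},\dots,v_{|\mathsf{T}|-1}$ be an ordering of $\mathsf{T}\setminus C^*$ such that $a\leq b$ whenever $v_a\sqsubseteq v_b$. Then for each integer $0\leq i<k$, the nodes $v_{|C^*|},v_{|C^*|+1},\dots,v_{|C^*|+k-i-1}$ are descendants of $v_{i+1}$.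
   Context: A rooted plane tree $\mathsf{T}$ is a finite tree with a distinguished root $\mathfrak{r}$, regarded as a poset $\leq_\mathsf{T}$ in which $v'\leq_\mathsf{T} v$ iff $v$ lies on the path from $v'$ to $\mathfrak{r}$. $\Delta_\mathsf{T}(v)=\{v':v'\leq_\mathsf{T} v\}$; a descendant of $v$ is an element of $\Delta_\mathsf{T}(v)\setminus\{v\}$; a leaf is a node with no descendants. $\mathcal{M}_\mathsf{T}$ is the set of maximal chains of $\mathsf{T}$ (paths from a leaf to the root). For $C\in\mathcal{M}_\mathsf{T}$ and $v\in C$: $\mathrm{height}_C(v)$ is the number of elements of $C$ strictly below $v$; if $v$ is not a leaf, $\mathrm{ch}_C(v)$ is the unique element of $C$ covered by $v$; $b_C(v)=|\Delta_\mathsf{T}(v)|-\mathrm{height}_C(v)-1$. The function $f_C\colon C\to\mathbb{Z}_{\geq 0}$ is defined recursively: $f_C(v)=0$ if $v$ is a leaf; otherwise, with $w=\mathrm{ch}_C(v)$, $f_C(v)=f_C(w)+1$ if $f_C(w)+1\leq b_C(w)$, and $f_C(v)=f_C(w)$ otherwise. *)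

theory Defs
  imports Main
begin

text \<open>A rooted tree on a finite node set V with root r, given by a parent map p
  (with the convention p r = r). The plane structure (ordering of children)
  plays no role in the statement and is omitted.\<close>

definition rooted_tree :: "'a set \<Rightarrow> 'a \<Rightarrow> ('a \<Rightarrow> 'a) \<Rightarrow> bool" where
  "rooted_tree V r p \<longleftrightarrow> finite V \<and> r \<in> V \<and> p r = r \<and> (\<forall>v\<in>V. p v \<in> V)
     \<and> (\<forall>v\<in>V. \<exists>k. (p ^^ k) v = r)"

definition tle :: "'a set \<Rightarrow> ('a \<Rightarrow> 'a) \<Rightarrow> 'a \<Rightarrow> 'a \<Rightarrow> bool" where
  "tle V p x y \<longleftrightarrow> x \<in> V \<and> y \<in> V \<and> (\<exists>k. (p ^^ k) x = y)"

definition Delta :: "'a set \<Rightarrow> ('a \<Rightarrow> 'a) \<Rightarrow> 'a \<Rightarrow> 'a set" where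
  "Delta V p v = {u. tle V p u v}"

definition is_leaf :: "'a set \<Rightarrow> ('a \<Rightarrow> 'a) \<Rightarrow> 'a \<Rightarrow> bool" where
  "is_leaf V p v \<longleftrightarrow> v \<in> V \<and> Delta V p v = {v}"

definition max_chains :: "'a set \<Rightarrow> ('a \<Rightarrow> 'a) \<Rightarrow> 'a set set" where
  "max_chains V p = {{u. tle V p l u} | l. is_leaf V p l}"

definition heightC :: "'a set \<Rightarrow> ('a \<Rightarrow> 'a) \<Rightarrow> 'a set \<Rightarrow> 'a \<Rightarrow> nat" where
  "heightC V p C v = card {u \<in> C. tle V p u v \<and> u \<noteq> v}"

definition bC :: "'a set \<Rightarrow> ('a \<Rightarrow> 'a) \<Rightarrow> 'a set \<Rightarrow> 'a \<Rightarrow> int" where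
  "bC V p C v = int (card (Delta V p v)) - int (heightC V p C v) - 1"

text \<open>f_C evaluated at the element of C of height j; the element of height j
  is ch_C of the element of height j+1.\<close>
fun fh :: "'a set \<Rightarrow> ('a \<Rightarrow> 'a) \<Rightarrow> 'a set \<Rightarrow> nat \<Rightarrow> nat" where
  "fh V p C 0 = 0"
| "fh V p C (Suc j) =
     (let w = (THE w. w \<in> C \<and> heightC V p C w = j)
      in if int (fh V p C j) + 1 \<le> bC V p C w then fh V p C j + 1 else fh V p C j)"

definition fC :: "'a set \<Rightarrow> ('a \<Rightarrow> 'a) \<Rightarrow> 'a set \<Rightarrow> 'a \<Rightarrow> nat" where
  "fC V p C v = fh V p C (heightC V p C v)"

definition Bblock :: "'a set \<Rightarrow> ('a \<Rightarrow> 'a) \<Rightarrow> 'a set \<Rightarrow> (nat \<Rightarrow> 'a) \<Rightarrow> nat \<Rightarrow> 'a set" where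
  "Bblock V p C v i = {u \<in> V - C. tle V p u (v i) \<and> \<not> tle V p u (v (Suc i))}"

definition sqle :: "'a set \<Rightarrow> ('a \<Rightarrow> 'a) \<Rightarrow> 'a set \<Rightarrow> (nat \<Rightarrow> 'a) \<Rightarrow> 'a \<Rightarrow> 'a \<Rightarrow> bool" where
  "sqle V p C v x y \<longleftrightarrow> (\<exists>i j. i + 2 \<le> card C \<and> j + 2 \<le> card C \<and>
      x \<in> Bblock V p C v i \<and> y \<in> Bblock V p C v j \<and>
      (j < i \<or> (i = j \<and> tle V p y x)))"

end

theory Submission
  imports Defs
begin

theorem lemma3p1:
  fixes V :: "'a set" and r :: 'a and p :: "'a \<Rightarrow> 'a"
    and C :: "'a set" and v :: "nat \<Rightarrow> 'a" and k :: nat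
  assumes tree: "rooted_tree V r p"
    and n2: "card V \<ge> 2"
    and Cmax: "C \<in> max_chains V p"
    and Copt: "\<forall>C' \<in> max_chains V p. card C' + fC V p C' r \<le> card C + fC V p C r"
    and kdef: "k = fC V p C r"
    and vbij: "bij_betw v {0..<card V} V"
    and v0: "v 0 = r"
    and vC: "\<forall>i < card C. v i \<in> C"
    and vdown: "\<forall>i. Suc i < card C \<longrightarrow> p (v (Suc i)) = v i"
    and vord: "\<forall>a b. card C \<le> a \<longrightarrow> a < card V \<longrightarrow> card C \<le> b \<longrightarrow> b < card V \<longrightarrow>
                 sqle V p C v (v a) (v b) \<longrightarrow> a \<le> b"
  shows "\<forall>i < k. \<forall>j. card C \<le> j \<and> j \<le> card C + k - i - 1 \<longrightarrow>
           v j \<in> Delta V p (v (Suc i)) - {v (Suc i)}"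
proof -
  define m where "m = card C"
  define N where "N = card V"
  from tree have finV: "finite V" and rV: "r \<in> V" and prr: "p r = r"
    and reach: "\<forall>v\<in>V. \<exists>k. (p^^k) v = r" unfolding rooted_tree_def by auto
  from Cmax obtain l where lleaf: "is_leaf V p l" and Cdef: "C = {u. tle V p l u}"
    unfolding max_chains_def by auto
  have lV: "l \<in> V" and Dl: "Delta V p l = {l}" using lleaf unfolding is_leaf_def by auto
  have CV: "C \<subseteq> V" using Cdef unfolding tle_def by auto
  have finC: "finite C" using CV finV finite_subset by auto
  have lC: "l \<in> C" using Cdef lV unfolding tle_def by (auto intro: exI[of _ 0])
  have trans: "\<And>x y z. tle V p x y \<Longrightarrow> tle V p y z \<Longrightarrow> tle V p x z"
  proof -
    fix x y z assume "tle V p x y" "tle V p y z"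
    then obtain a b where "(p^^a) x = y" "(p^^b) y = z" "x \<in> V" "z \<in> V" unfolding tle_def by auto
    then have "(p^^(b+a)) x = z" by (simp add: funpow_add)
    then show "tle V p x z" using \<open>x\<in>V\<close> \<open>z\<in>V\<close> unfolding tle_def by blast
  qed
  have rfix: "\<And>t. (p^^t) r = r"
  proof - fix t show "(p^^t) r = r" by (induction t) (auto simp: prr) qed
  have antisym: "\<And>x y. tle V p x y \<Longrightarrow> tle V p y x \<Longrightarrow> x = y"
  proof -
    fix x y assume xy: "tle V p x y" and yx: "tle V p y x"
    then obtain a b where a: "(p^^a) x = y" and b: "(p^^b) y = x" and xV: "x \<in> V"
      unfolding tle_def by auto
    have per: "(p^^(b+a)) x = x" using a b by (simp add: funpow_add)
    have perN: "\<And>M. (p^^(M*(b+a))) x = x"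
    proof -
      fix M show "(p^^(M*(b+a))) x = x"
      proof (induction M)
        case 0 show ?case by simp
      next
        case (Suc M)
        have "(p^^(Suc M*(b+a))) x = (p^^(b+a)) ((p^^(M*(b+a))) x)"
          by (simp add: funpow_add)
        also have "\<dots> = x" using Suc per by simp
        finally show ?case .
      qed
    qed
    obtain K where K: "(p^^K) x = r" using reach xV by auto
    show "x = y"
    proof (cases "b + a = 0")
      case True then have "a = 0" by simp then show ?thesis using a by simp
    next
      case False
      then have "K \<le> K*(b+a)" by auto
      then have eq: "K*(b+a) = (K*(b+a) - K) + K" by simp
      have "(p^^(K*(b+a))) x = (p^^(K*(b+a)-K)) ((p^^K) x)"
        by (subst eq) (simp add: funpow_add)
      then have "x = r" using perN K rfix by simp
      then show ?thesis using a rfix by simp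
    qed
  qed
  have vinj: "inj_on v {0..<N}" and vimg: "v ` {0..<N} = V"
    using vbij unfolding bij_betw_def N_def by auto
  have mV: "m \<le> N" using card_mono finV CV unfolding m_def N_def by auto
  have vV: "\<And>a. a < N \<Longrightarrow> v a \<in> V" using vimg by auto
  have vinj2: "\<And>a b. a < N \<Longrightarrow> b < N \<Longrightarrow> v a = v b \<Longrightarrow> a = b"
    using vinj unfolding inj_on_def by auto
  have Cimg: "C = v ` {0..<m}"
  proof -
    have sub: "v ` {0..<m} \<subseteq> C" using vC m_def by auto
    have "inj_on v {0..<m}" using inj_on_subset[OF vinj] mV by auto
    then have "card (v ` {0..<m}) = m" by (simp add: card_image)
    then show ?thesis using card_subset_eq[OF finC sub] m_def by auto
  qed
  have m1: "1 \<le> m" using lC finC m_def card_0_eq by fastforce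
  have down: "\<And>a d. a + d < m \<Longrightarrow> (p^^d) (v (a+d)) = v a"
  proof -
    fix a d show "a + d < m \<Longrightarrow> (p^^d) (v (a+d)) = v a"
    proof (induction d)
      case 0 then show ?case by simp
    next
      case (Suc d)
      have "p (v (Suc (a+d))) = v (a+d)" using vdown Suc.prems m_def by auto
      then show ?case using Suc by (simp add: funpow_Suc_right del: funpow.simps)
    qed
  qed
  have chain: "\<And>a b. a \<le> b \<Longrightarrow> b < m \<Longrightarrow> tle V p (v b) (v a)"
  proof -
    fix a b assume ab: "a \<le> b" "b < m"
    then have "(p^^(b-a)) (v (a + (b-a))) = v a" using down[of a "b-a"] by simp
    then have "(p^^(b-a)) (v b) = v a" using ab by simp
    then show "tle V p (v b) (v a)" unfolding tle_def using vV ab mV by auto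
  qed
  have chain_iff: "\<And>a b. a < m \<Longrightarrow> b < m \<Longrightarrow> tle V p (v b) (v a) \<longleftrightarrow> a \<le> b"
  proof
    fix a b assume ab: "a < m" "b < m" "tle V p (v b) (v a)"
    show "a \<le> b"
    proof (rule ccontr)
      assume "\<not> a \<le> b"
      then have "tle V p (v a) (v b)" using chain ab by auto
      then have "v a = v b" using antisym ab by auto
      then have "a = b" using vinj2 ab mV by auto
      then show False using \<open>\<not> a \<le> b\<close> by simp
    qed
  next
    fix a b assume "a < m" "b < m" "a \<le> b" then show "tle V p (v b) (v a)" using chain by auto
  qed
  have vlast: "v (m-1) = l"
  proof -
    obtain a where a: "a < m" "l = v a" using lC Cimg by auto
    have "tle V p (v (m-1)) (v a)" using chain a by auto
    then have "v (m-1) \<in> Delta V p l" using a by (auto simp: Delta_def)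
    then show ?thesis using Dl by auto
  qed
  have height: "\<And>a. a < m \<Longrightarrow> heightC V p C (v a) = m - 1 - a"
  proof -
    fix a assume a: "a < m"
    have "{u \<in> C. tle V p u (v a) \<and> u \<noteq> v a} = v ` {Suc a..<m}"
    proof safe
      fix u assume u: "u \<in> C" "tle V p u (v a)" "u \<noteq> v a"
      then obtain b where b: "b < m" "u = v b" using Cimg by auto
      then have "a \<le> b" using chain_iff a u by auto
      moreover have "a \<noteq> b" using u b by auto
      ultimately show "u \<in> v ` {Suc a..<m}" using b by auto
    next
      fix b assume "b \<in> {Suc a..<m}" then show "v b \<in> C" using Cimg by auto
    next
      fix b assume "b \<in> {Suc a..<m}" then show "tle V p (v b) (v a)" using chain by auto
    next
      fix b assume "b \<in> {Suc a..<m}" "v b = v a"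
      then have "b = a" using vinj2[of b a] a mV by auto
      then show False using \<open>b \<in> {Suc a..<m}\<close> by auto
    qed
    moreover have "inj_on v {Suc a..<m}" using inj_on_subset[OF vinj] mV by auto
    ultimately show "heightC V p C (v a) = m - 1 - a"
      unfolding heightC_def by (simp add: card_image)
  qed
  have finDelta: "\<And>x. finite (Delta V p x)"
    using finV by (rule finite_subset[rotated]) (auto simp: Delta_def tle_def)
  have DeltaC: "\<And>a. a < m \<Longrightarrow> Delta V p (v a) \<inter> C = v ` {a..<m}"
  proof -
    fix a assume a: "a < m"
    show "Delta V p (v a) \<inter> C = v ` {a..<m}"
    proof safe
      fix u assume u: "u \<in> Delta V p (v a)" "u \<in> C"
      then obtain b where b: "b < m" "u = v b" using Cimg by auto
      then have "a \<le> b" using chain_iff a u by (auto simp: Delta_def)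
      then show "u \<in> v ` {a..<m}" using b by auto
    next
      fix b assume "b \<in> {a..<m}" then show "v b \<in> C" using Cimg by auto
    next
      fix b assume "b \<in> {a..<m}" then show "v b \<in> Delta V p (v a)" using chain by (auto simp: Delta_def)
    qed
  qed
  define b' where "b' a = card (Delta V p (v a) - C)" for a
  have bCeq: "\<And>a. a < m \<Longrightarrow> bC V p C (v a) = int (b' a)"
  proof -
    fix a assume a: "a < m"
    have "Delta V p (v a) = (Delta V p (v a) - C) \<union> (Delta V p (v a) \<inter> C)" by auto
    then have "card (Delta V p (v a)) = b' a + card (Delta V p (v a) \<inter> C)"
      unfolding b'_def using finDelta
      by (metis card_Un_disjoint Diff_disjoint Int_Diff_disjoint Int_commute Un_Diff_Int card_Diff_subset_Int inf.cobounded1 finite_Int finite_Diff)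
    moreover have "card (Delta V p (v a) \<inter> C) = m - a"
    proof -
      have "inj_on v {a..<m}" using inj_on_subset[OF vinj] mV by auto
      then show ?thesis using DeltaC[OF a] by (simp add: card_image)
    qed
    ultimately show "bC V p C (v a) = int (b' a)"
      unfolding bC_def using height[OF a] a by simp
  qed
  have bmono: "\<And>a a'. a \<le> a' \<Longrightarrow> a' < m \<Longrightarrow> b' a' \<le> b' a"
  proof -
    fix a a' assume aa: "a \<le> a'" "a' < m"
    have "Delta V p (v a') - C \<subseteq> Delta V p (v a) - C"
      using trans chain[OF aa] unfolding Delta_def by blast
    then show "b' a' \<le> b' a" unfolding b'_def using finDelta by (simp add: card_mono)
  qed
  have theW: "\<And>t. t < m \<Longrightarrow> (THE w. w \<in> C \<and> heightC V p C w = t) = v (m-1-t)"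
  proof -
    fix t assume t: "t < m"
    show "(THE w. w \<in> C \<and> heightC V p C w = t) = v (m-1-t)"
    proof (rule the_equality)
      show "v (m-1-t) \<in> C \<and> heightC V p C (v (m-1-t)) = t"
        using Cimg height t by auto
    next
      fix w assume w: "w \<in> C \<and> heightC V p C w = t"
      then obtain b where b: "b < m" "w = v b" using Cimg by auto
      then have "m - 1 - b = t" using height w by auto
      then show "w = v (m-1-t)" using b t by auto
    qed
  qed
  have fhle1: "\<And>t. fh V p C (Suc t) \<le> fh V p C t + 1" by (simp add: Let_def)
  have fhsub: "\<And>s d. fh V p C (s+d) \<le> fh V p C s + d"
  proof -
    fix s d show "fh V p C (s+d) \<le> fh V p C s + d"
    proof (induction d)
      case 0 then show ?case by simp
    next
      case (Suc d) then show ?case using fhle1[of "s+d"] by simp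
    qed
  qed
  have fhS: "\<And>t. Suc t < m \<Longrightarrow> fh V p C (Suc t) =
     (if fh V p C t + 1 \<le> b' (m-1-t) then fh V p C t + 1 else fh V p C t)"
    using theW bCeq by (simp add: Let_def)
  have P: "\<And>t. t < m \<Longrightarrow> fh V p C t \<le> b' (m-1-t)"
  proof -
    fix t show "t < m \<Longrightarrow> fh V p C t \<le> b' (m-1-t)"
    proof (induction t)
      case 0 then show ?case by simp
    next
      case (Suc t)
      have "fh V p C (Suc t) \<le> b' (m-1-t)" using fhS[OF Suc.prems] Suc by auto
      moreover have "b' (m-1-t) \<le> b' (m-1-Suc t)" using bmono Suc.prems by auto
      ultimately show ?case by simp
    qed
  qed
  have Q: "\<And>t. Suc t < m \<Longrightarrow> fh V p C (Suc t) \<le> b' (m-1-t)"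
    using fhS P by fastforce
  have kfh: "k = fh V p C (m-1)"
    using kdef height[of 0] m1 v0 unfolding fC_def by auto
  have block: "\<And>u. u \<in> V - C \<Longrightarrow> \<exists>a. a + 2 \<le> m \<and> u \<in> Bblock V p C v a \<and>
       (\<forall>c<m. tle V p u (v c) \<longrightarrow> c \<le> a)"
  proof -
    fix u assume u: "u \<in> V - C"
    define S where "S = {c. c < m \<and> tle V p u (v c)}"
    have 0: "0 \<in> S" using reach u v0 rV m1 unfolding S_def tle_def by auto
    have finS: "finite S" unfolding S_def by auto
    define a where "a = Max S"
    have aS: "a \<in> S" using Max_in[OF finS] 0 a_def by auto
    have amax: "\<forall>c<m. tle V p u (v c) \<longrightarrow> c \<le> a" using Max_ge[OF finS] a_def by (auto simp: S_def)
    have "a \<noteq> m - 1"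
    proof
      assume "a = m - 1"
      then have "tle V p u l" using aS vlast by (auto simp: S_def)
      then have "u \<in> Delta V p l" by (auto simp: Delta_def)
      then show False using Dl lC u by auto
    qed
    then have a2: "a + 2 \<le> m" using aS by (auto simp: S_def)
    have "\<not> tle V p u (v (Suc a))" proof
      assume "tle V p u (v (Suc a))"
      then have "Suc a \<le> a" using amax a2 by auto
      then show False by simp
    qed
    then have "u \<in> Bblock V p C v a" using u aS S_def by (auto simp: Bblock_def)
    then show "\<exists>a. a + 2 \<le> m \<and> u \<in> Bblock V p C v a \<and> (\<forall>c<m. tle V p u (v c) \<longrightarrow> c \<le> a)"
      using a2 amax by blast
  qed
  show ?thesis
  proof (intro allI impI)
    fix i j assume ik: "i < k" and jr: "card C \<le> j \<and> j \<le> card C + k - i - 1"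
    have "k \<le> m - 1" using kfh fhsub[of 0 "m-1"] by simp
    then have im: "Suc i < m" using ik by simp
    have "fh V p C (m-1-i+i) \<le> fh V p C (m-1-i) + i" by (rule fhsub)
    then have k1: "k \<le> fh V p C (m-1-i) + i" using kfh im by simp
    have "Suc (m-2-i) < m" using im by simp
    then have "fh V p C (Suc (m-2-i)) \<le> b' (m-1-(m-2-i))" by (rule Q)
    moreover have "Suc (m-2-i) = m-1-i" "m-1-(m-2-i) = Suc i" using im by auto
    ultimately have "fh V p C (m-1-i) \<le> b' (Suc i)" by (metis)
    with k1 have kb: "k - i \<le> b' (Suc i)" by simp
    define D where "D = Delta V p (v (Suc i)) - C"
    have cD: "card D = b' (Suc i)" unfolding D_def b'_def by simp
    have DVC: "D \<subseteq> V - C" unfolding D_def Delta_def tle_def by auto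
    have sq: "\<And>x y. x \<in> D \<Longrightarrow> y \<in> V - C \<Longrightarrow> y \<notin> D \<Longrightarrow> sqle V p C v x y"
    proof -
      fix x y assume x: "x \<in> D" and y: "y \<in> V - C" "y \<notin> D"
      obtain a where a: "a + 2 \<le> m" "x \<in> Bblock V p C v a"
         "\<forall>c<m. tle V p x (v c) \<longrightarrow> c \<le> a" using block DVC x by blast
      have "tle V p x (v (Suc i))" using x D_def by (auto simp: Delta_def)
      then have ia: "Suc i \<le> a" using a im by auto
      obtain b where b: "b + 2 \<le> m" "y \<in> Bblock V p C v b" using block y by blast
      have "b < Suc i"
      proof (rule ccontr)
        assume "\<not> b < Suc i"
        then have "tle V p (v b) (v (Suc i))" using chain b by auto
        moreover have "tle V p y (v b)" using b by (auto simp: Bblock_def)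
        ultimately have "tle V p y (v (Suc i))" using trans by blast
        then show False using y D_def by (auto simp: Delta_def)
      qed
      then show "sqle V p C v x y" unfolding sqle_def m_def[symmetric]
        using a b ia by (intro exI[of _ a] exI[of _ b]) auto
    qed
    have Dsub: "D \<subseteq> v ` {m..<N}"
    proof
      fix x assume x: "x \<in> D"
      then obtain a where a: "a < N" "x = v a" using DVC vimg by force
      have "\<not> a < m" using a x DVC Cimg by auto
      then show "x \<in> v ` {m..<N}" using a by auto
    qed
    have "card D \<le> card (v ` {m..<N})" using Dsub by (simp add: card_mono)
    also have "\<dots> \<le> N - m" using card_image_le[of "{m..<N}" v] by simp
    finally have cDN: "card D \<le> N - m" .
    have jD: "j < m + card D" using jr kb cD ik m_def by linarith
    then have jN: "j < N" using cDN mV by linarith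
    have vjVC: "v j \<in> V - C"
    proof -
      have "v j \<notin> C"
      proof
        assume "v j \<in> C"
        then obtain a where a: "a < m" "v j = v a" using Cimg by auto
        then have "j = a" using vinj2[of j a] jN mV by auto
        then show False using a jr m_def by auto
      qed
      then show ?thesis using vV jN by auto
    qed
    have "v j \<in> D"
    proof (rule ccontr)
      assume nj: "v j \<notin> D"
      have "D \<subseteq> v ` {m..<j}"
      proof
        fix x assume x: "x \<in> D"
        then obtain a where a: "m \<le> a" "a < N" "x = v a" using subsetD[OF Dsub x] by auto
        have "sqle V p C v (v a) (v j)" using sq[of "v a" "v j"] x a vjVC nj by blast
        moreover have "card C \<le> a" "a < card V" "card C \<le> j" "j < card V" using a jr jN m_def N_def by auto
        ultimately have "a \<le> j" using vord by blast
        moreover have "a \<noteq> j" using nj x a by auto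
        ultimately show "x \<in> v ` {m..<j}" using a by auto
      qed
      then have "card D \<le> card (v ` {m..<j})" by (simp add: card_mono)
      also have "\<dots> \<le> j - m" using card_image_le[of "{m..<j}" v] by simp
      finally show False using jD jr m_def by linarith
    qed
    moreover have "v (Suc i) \<in> C" using Cimg im by auto
    ultimately show "v j \<in> Delta V p (v (Suc i)) - {v (Suc i)}" unfolding D_def by auto
  qed
qed

end
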